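(* If $u,v$ are distinct terms in $T_1^\circ$, then in $B_\bullet$ the element $u(1)^{-1}v(1)$ does not belong to the image $\mathrm{Im}\,\partial$ of $\partial$.
   Context: $T_1^\circ$ is the set of terms in a single variable $x$ built with a binary operator $\circ$. The group $B_\bullet$ is generated by $\sigma_1,\sigma_2,\dots$ and $a_1,a_2,\dots$ subject to: $\sigma_j\sigma_i=\sigma_i\sigma_j$ and $a_j\sigma_i=\sigma_ia_j$ for $j\ge i+2$; $a_j\sigma_i=\sigma_{i+1}a_j$ and $a_ja_i=a_{i+1}a_j$ for $j\le i-1$; $\sigma_j\sigma_i\sigma_j=\sigma_i\sigma_j\sigma_i$, $\sigma_i\sigma_ja_i=a_j\sigma_i$ and $\sigma_j\sigma_ia_j=a_i\sigma_i$ for $j=i+1$. $\partial$ is the endomorphism of $B_\bullet$ with $\partial\sigma_i=\sigma_{i+1}$, $\partial a_i=a_{i+1}$. The operation $\circ$ on $B_\bullet$ is $\beta\circ\gamma=\beta\cdot\partial\gamma\cdot a_1$, and for $v\in T_1^\circ$, $v(1)$ is its evaluation at the identity $1$: $x(1)=1$ and $(v_1\circ v_2)(1)=v_1(1)\cdot\partial v_2(1)\cdot a_1$. *)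

theory Defs
  imports Main
begin

text \<open>Generators of B_bullet. Indices are shifted by one:
  S i stands for sigma_(i+1), A i stands for a_(i+1), so S 0 = sigma_1, A 0 = a_1.\<close>
datatype gen = S nat | A nat

text \<open>Group words: letters (g, True) = g, (g, False) = g^-1.\<close>
type_synonym word = "(gen \<times> bool) list"

definition winv :: "word \<Rightarrow> word" where
  "winv w = rev (map (\<lambda>(g, b). (g, \<not> b)) w)"

fun gshift :: "gen \<Rightarrow> gen" where
  "gshift (S i) = S (Suc i)"
| "gshift (A i) = A (Suc i)"

definition dshift :: "word \<Rightarrow> word" where
  "dshift w = map (\<lambda>(g, b). (gshift g, b)) w"

definition pw :: "gen list \<Rightarrow> word" where
  "pw gs = map (\<lambda>g. (g, True)) gs"

text \<open>Defining relations of B_bullet (in shifted indices; the conditions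
  j >= i+2, j <= i-1, j = i+1 are invariant under the shift).\<close>
inductive brel :: "word \<Rightarrow> word \<Rightarrow> bool" where
  r1: "j \<ge> i + 2 \<Longrightarrow> brel (pw [S j, S i]) (pw [S i, S j])"
| r2: "j \<ge> i + 2 \<Longrightarrow> brel (pw [A j, S i]) (pw [S i, A j])"
| r3: "j + 1 \<le> i \<Longrightarrow> brel (pw [A j, S i]) (pw [S (i + 1), A j])"
| r4: "j + 1 \<le> i \<Longrightarrow> brel (pw [A j, A i]) (pw [A (i + 1), A j])"
| r5: "j = i + 1 \<Longrightarrow> brel (pw [S j, S i, S j]) (pw [S i, S j, S i])"
| r6: "j = i + 1 \<Longrightarrow> brel (pw [S i, S j, A i]) (pw [A j, S i])"
| r7: "j = i + 1 \<Longrightarrow> brel (pw [S j, S i, A j]) (pw [A i, S i])"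

inductive beq :: "word \<Rightarrow> word \<Rightarrow> bool" where
  refl: "beq w w"
| sym: "beq w v \<Longrightarrow> beq v w"
| trans: "beq u v \<Longrightarrow> beq v w \<Longrightarrow> beq u w"
| ctxt: "beq v v' \<Longrightarrow> beq (u @ v @ w) (u @ v' @ w)"
| cancel: "beq [(g, b), (g, \<not> b)] []"
| rel: "brel l r \<Longrightarrow> beq l r"

datatype tm = X | Op tm tm

fun ev1 :: "tm \<Rightarrow> word" where
  "ev1 X = []"
| "ev1 (Op t1 t2) = ev1 t1 @ dshift (ev1 t2) @ [(A 0, True)]"

end

theory Submission
  imports Defs "HOL-Library.Stream"
begin

type_synonym pt = "bool stream"

definition dsh :: "(pt \<Rightarrow> pt) \<Rightarrow> pt \<Rightarrow> pt" where
  "dsh f s = (if shd s then True ## f (stl s) else s)"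

definition sg :: "pt \<Rightarrow> pt" where
  "sg s = (if shd s then (if shd (stl s) then s else False ## stl (stl s))
           else True ## False ## stl s)"

definition a1 :: "pt \<Rightarrow> pt" where
  "a1 s = (if shd s then True ## True ## stl s
           else if shd (stl s) then True ## False ## stl (stl s) else False ## stl (stl s))"

definition a1i :: "pt \<Rightarrow> pt" where
  "a1i s = (if shd s then (if shd (stl s) then True ## stl (stl s) else False ## True ## stl (stl s))
           else False ## False ## stl s)"

fun gf :: "gen \<Rightarrow> bool \<Rightarrow> pt \<Rightarrow> pt" where
  "gf (S i) b = (dsh ^^ i) sg"
| "gf (A i) b = (dsh ^^ i) (if b then a1 else a1i)"

definition F :: "word \<Rightarrow> pt \<Rightarrow> pt" where
  "F w = foldr (\<lambda>(g, b) f. gf g b \<circ> f) w id"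

lemma F_simps[simp]: "F [] = id" "F ((g,b) # w) = gf g b \<circ> F w"
  by (auto simp: F_def)

lemma F_app[simp]: "F (u @ v) = F u \<circ> F v"
  by (induction u) auto

lemma dsh_comp: "dsh f \<circ> dsh g = dsh (f \<circ> g)"
  by (auto simp: fun_eq_iff dsh_def)

lemma dsh_id[simp]: "dsh id = id"
  by (auto simp: fun_eq_iff dsh_def) (metis stream.collapse)

lemma dsh_id'[simp]: "dsh (\<lambda>x. x) = (\<lambda>x. x)"
  using dsh_id by (simp add: id_def)

lemma dshn_comp: "(dsh ^^ n) f \<circ> (dsh ^^ n) g = (dsh ^^ n) (f \<circ> g)"
proof (induction n)
  case (Suc n)
  have "(dsh ^^ Suc n) f \<circ> (dsh ^^ Suc n) g = dsh ((dsh ^^ n) f) \<circ> dsh ((dsh ^^ n) g)"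
    by (simp only: funpow.simps comp_apply)
  also have "\<dots> = dsh ((dsh ^^ n) f \<circ> (dsh ^^ n) g)" by (rule dsh_comp)
  also have "\<dots> = (dsh ^^ Suc n) (f \<circ> g)" using Suc by (metis funpow.simps(2) comp_apply)
  finally show ?case .
qed simp

lemma dshn_id[simp]: "(dsh ^^ n) id = id"
proof (induction n)
  case (Suc n)
  show ?case by (simp only: Suc funpow.simps comp_apply dsh_id)
qed simp

lemma stream3: obtains x y z t where "s = x ## y ## z ## t"
  by (metis stream.collapse)

lemma sg_sg: "sg \<circ> sg = id"
  apply (rule ext) subgoal for s by (cases s rule: stream3) (auto simp: sg_def)
  done

lemma a1_a1i: "a1 \<circ> a1i = id" "a1i \<circ> a1 = id"
  apply (rule ext) subgoal for s by (cases s rule: stream3) (auto simp: a1_def a1i_def)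
  apply (rule ext) subgoal for s by (cases s rule: stream3) (auto simp: a1_def a1i_def)
  done

lemma gf_cancel: "gf g b \<circ> gf g (\<not> b) = id"
  by (cases g) (auto simp: dshn_comp sg_sg a1_a1i)

lemma gf_shift: "gf (gshift g) b = dsh (gf g b)"
  by (cases g) auto

lemma F_dshift: "F (dshift w) = dsh (F w)"
  by (induction w) (auto simp: dshift_def gf_shift dsh_comp)

lemma lemC: "sg \<circ> dsh (dsh g) = dsh (dsh g) \<circ> sg"
  apply (rule ext) subgoal for s by (cases s rule: stream3) (auto simp: sg_def dsh_def)
  done

lemma lemD: "a1 \<circ> dsh g = dsh (dsh g) \<circ> a1"
  apply (rule ext) subgoal for s by (cases s rule: stream3) (auto simp: a1_def dsh_def)
  done

lemma lem5: "dsh sg \<circ> sg \<circ> dsh sg = sg \<circ> dsh sg \<circ> sg"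
  apply (rule ext) subgoal for s by (cases s rule: stream3) (auto simp: sg_def dsh_def)
  done

lemma lem6: "sg \<circ> dsh sg \<circ> a1 = dsh a1 \<circ> sg"
  apply (rule ext) subgoal for s by (cases s rule: stream3) (auto simp: sg_def a1_def dsh_def)
  done

lemma lem7: "dsh sg \<circ> sg \<circ> dsh a1 = a1 \<circ> sg"
  apply (rule ext) subgoal for s by (cases s rule: stream3) (auto simp: sg_def a1_def dsh_def)
  done

lemma pw2: "F (pw [x, y]) = gf x True \<circ> gf y True"
  by (simp add: pw_def)
lemma pw3: "F (pw [x, y, z]) = gf x True \<circ> gf y True \<circ> gf z True"
  by (simp add: pw_def o_assoc)

lemma comm2: "(dsh ^^ (i + k + 2)) f \<circ> (dsh ^^ i) sg = (dsh ^^ i) sg \<circ> (dsh ^^ (i + k + 2)) f"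
proof -
  have "i + k + 2 = i + Suc (Suc k)" by simp
  then have e: "(dsh ^^ (i + k + 2)) f = (dsh ^^ i) (dsh (dsh ((dsh ^^ k) f)))"
    by (simp only: funpow_add funpow.simps comp_apply)
  show ?thesis unfolding e dshn_comp lemC ..
qed

lemma comm3: "(dsh ^^ j) f \<circ> (dsh ^^ (j + k + 1)) g = (dsh ^^ (j + k + 2)) g \<circ> (dsh ^^ j) f"
  if "f = a1" for f
proof -
  have "j + k + 1 = j + Suc k" "j + k + 2 = j + Suc (Suc k)" by simp_all
  then have e: "(dsh ^^ (j + k + 1)) g = (dsh ^^ j) (dsh ((dsh ^^ k) g))"
          "(dsh ^^ (j + k + 2)) g = (dsh ^^ j) (dsh (dsh ((dsh ^^ k) g)))"
    by (simp_all only: funpow_add funpow.simps comp_apply)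
  show ?thesis unfolding e dshn_comp that lemD ..
qed

lemma dshn_dsh: "(dsh ^^ i) (dsh f) = dsh ((dsh ^^ i) f)"
  by (metis funpow_swap1)

lemma brel_F: "brel l r \<Longrightarrow> F l = F r"
proof (induction rule: brel.induct)
  case (r1 j i)
  then obtain k where k: "j = i + k + 2" by (metis add.commute le_iff_add add.assoc)
  show ?case unfolding pw2 gf.simps k by (rule comm2)
next
  case (r2 j i)
  then obtain k where k: "j = i + k + 2" by (metis add.commute le_iff_add add.assoc)
  show ?case unfolding pw2 gf.simps k if_True by (rule comm2)
next
  case (r3 j i)
  then obtain k where k: "i = j + k + 1" by (metis add.commute le_iff_add add.assoc)
  have kk: "j + k + 1 + 1 = j + k + 2" by simp
  show ?case unfolding pw2 gf.simps k if_True kk by (rule comm3) simp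
next
  case (r4 j i)
  then obtain k where k: "i = j + k + 1" by (metis add.commute le_iff_add add.assoc)
  have kk: "j + k + 1 + 1 = j + k + 2" by simp
  show ?case unfolding pw2 gf.simps k if_True kk by (rule comm3) simp
next
  case (r5 j i)
  have "(dsh ^^ i) (dsh sg \<circ> sg \<circ> dsh sg) = (dsh ^^ i) (sg \<circ> dsh sg \<circ> sg)"
    using lem5 by simp
  then show ?case unfolding pw3 gf.simps r5 dshn_comp[symmetric] by (simp add: o_assoc dshn_dsh fun_eq_iff)
next
  case (r6 j i)
  have "(dsh ^^ i) (sg \<circ> dsh sg \<circ> a1) = (dsh ^^ i) (dsh a1 \<circ> sg)"
    using lem6 by simp
  then show ?case unfolding pw3 pw2 gf.simps r6 if_True dshn_comp[symmetric] by (simp add: o_assoc dshn_dsh fun_eq_iff)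
next
  case (r7 j i)
  have "(dsh ^^ i) (dsh sg \<circ> sg \<circ> dsh a1) = (dsh ^^ i) (a1 \<circ> sg)"
    using lem7 by simp
  then show ?case unfolding pw3 pw2 gf.simps r7 if_True dshn_comp[symmetric] by (simp add: o_assoc dshn_dsh fun_eq_iff)
qed

lemma beq_F: "beq w v \<Longrightarrow> F w = F v"
proof (induction rule: beq.induct)
  case (cancel g b)
  then show ?case using gf_cancel[of g b] by simp
next
  case (rel l r)
  then show ?case by (rule brel_F)
qed auto

lemma F_winv: "F (winv x) \<circ> F x = id"
proof (induction x)
  case Nil then show ?case by (simp add: winv_def)
next
  case (Cons p x)
  obtain g b where p: "p = (g, b)" by fastforce
  have "winv (p # x) = winv x @ [(g, \<not> b)]" by (simp add: winv_def p)
  then have "F (winv (p # x)) \<circ> F (p # x) = F (winv x) \<circ> (gf g (\<not> b) \<circ> gf g b) \<circ> F x"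
    by (simp add: p o_assoc)
  also have "gf g (\<not> b) \<circ> gf g b = id" using gf_cancel[of g "\<not> b"] by simp
  finally show ?case using Cons by simp
qed

lemma winv_winv: "winv (winv x) = x"
  by (induction x) (auto simp: winv_def)

lemma F_winv2: "F x \<circ> F (winv x) = id"
  using F_winv[of "winv x"] by (simp add: winv_winv)

fun nn :: "tm \<Rightarrow> nat" where
  "nn X = 0"
| "nn (Op a b) = nn a + nn b + 1"

lemma rep_cons: "replicate n True @- True ## x = replicate (Suc n) True @- x"
  by (induction n) auto

lemma rep_neq: "replicate n True @- True ## x \<noteq> False ## y"
  by (cases n) auto

lemma F_true: "F (ev1 t) (True ## s) = replicate (nn t) True @- True ## s"
proof (induction t arbitrary: s)
  case X then show ?case by simp
next
  case (Op t1 t2)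
  have "F (ev1 (Op t1 t2)) (True ## s) = F (ev1 t1) (dsh (F (ev1 t2)) (True ## True ## s))"
    by (simp add: F_dshift a1_def)
  also have "\<dots> = F (ev1 t1) (True ## replicate (nn t2) True @- True ## s)"
    by (simp add: dsh_def Op)
  also have "\<dots> = replicate (nn t1) True @- True ## replicate (nn t2) True @- True ## s"
    using Op(1) by simp
  also have "\<dots> = replicate (nn (Op t1 t2)) True @- True ## s"
    by (simp add: rep_cons shift_append[symmetric] replicate_add[symmetric])
  finally show ?case .
qed

lemma F_ff: "F (ev1 (Op t1 t2)) (False ## False ## s) = F (ev1 t1) (False ## s)"
  by (simp add: F_dshift a1_def dsh_def)

lemma F_ft: "F (ev1 (Op t1 t2)) (False ## True ## s) =
   replicate (nn t1) True @- True ## F (ev1 t2) (False ## s)"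
  by (simp add: F_dshift a1_def dsh_def F_true)

lemma shd_rep: "shd (replicate n True @- True ## s) = True"
  by (cases n) auto

lemma shift_rep_inj: "replicate n True @- x = replicate n True @- y \<Longrightarrow> x = y"
  by (induction n) auto

lemma inj_ev: "(\<forall>s. F (ev1 u) (False ## s) = F (ev1 v) (False ## s)) \<Longrightarrow> u = v"
proof (induction u arbitrary: v)
  case X
  show ?case
  proof (cases v)
    case (Op v1 v2)
    have "F (ev1 X) (False ## True ## sconst True) = F (ev1 v) (False ## True ## sconst True)"
      using X by blast
    then show ?thesis using rep_neq unfolding Op F_ft by (metis ev1.simps(1) F_simps(1) id_apply)
  qed simp
next
  case (Op u1 u2)
  note IH1 = Op.IH(1) and IH2 = Op.IH(2) and pr = Op.prems
  show ?case
  proof (cases v)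
    case X
    have "F (ev1 (Op u1 u2)) (False ## True ## sconst True) = F (ev1 v) (False ## True ## sconst True)"
      using pr by blast
    then show ?thesis using rep_neq unfolding X F_ft by (metis ev1.simps(1) F_simps(1) id_apply)
  next
    case (Op v1 v2)
    have "\<forall>s. F (ev1 u1) (False ## s) = F (ev1 v1) (False ## s)"
      using pr F_ff unfolding Op by metis
    then have 1: "u1 = v1" using IH1 by blast
    have "\<forall>s. F (ev1 u2) (False ## s) = F (ev1 v2) (False ## s)"
    proof
      fix s
      have "F (ev1 (Op u1 u2)) (False ## True ## s) = F (ev1 v) (False ## True ## s)"
        using pr by blast
      then show "F (ev1 u2) (False ## s) = F (ev1 v2) (False ## s)"
        unfolding Op F_ft 1 by (auto dest: shift_rep_inj)
    qed
    then have "u2 = v2" using IH2 by blast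
    then show ?thesis using 1 Op by simp
  qed
qed

theorem lemma2p9:
  fixes u v :: tm
  assumes "u \<noteq> v"
  shows "\<not> (\<exists>w. beq (winv (ev1 u) @ ev1 v) (dshift w))"
proof
  assume "\<exists>w. beq (winv (ev1 u) @ ev1 v) (dshift w)"
  then obtain w where "beq (winv (ev1 u) @ ev1 v) (dshift w)" by blast
  then have e: "F (winv (ev1 u)) \<circ> F (ev1 v) = dsh (F w)"
    using beq_F F_dshift by fastforce
  have "F (ev1 v) = F (ev1 u) \<circ> dsh (F w)"
  proof -
    have "F (ev1 v) = (F (ev1 u) \<circ> F (winv (ev1 u))) \<circ> F (ev1 v)"
      using F_winv2 by simp
    also have "\<dots> = F (ev1 u) \<circ> dsh (F w)" using e by (simp add: o_assoc[symmetric])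
    finally show ?thesis .
  qed
  then have "\<forall>s. F (ev1 u) (False ## s) = F (ev1 v) (False ## s)"
    by (simp add: dsh_def)
  then have "u = v" by (rule inj_ev)
  with assms show False by simp
qed

end
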